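(* Fix $L\ge1$, rates $a_1,\ldots,a_L>0$, $\alpha,\beta>0$ with $\alpha a_i<1$ for all $i$, an $L$-particle configuration $\vec{\mathsf{x}}$, and $m\in\{1,\ldots,L\}$. With $\vec{\mathsf{x}}'$, $\mathsf{y}^{\dagger}_m$ and $\vec{\mathsf{y}}^{\,GB}$ constructed as described in the context, conditionally on $\vec{\mathsf{x}}$ the joint distribution of $(\mathsf{x}'_m,\mathsf{y}^{\dagger}_m)$ is the same as the joint distribution of $(\mathsf{x}'_m,\mathsf{y}^{GB}_m)$.
   Context: Fix $q\in(0,1)$; $(z;q)_k=\prod_{i=0}^{k-1}(1-zq^i)$. For $\gamma\in(0,1)$ and $m\in\mathbb{Z}_{\ge0}$ let $\mathbf{p}_{m,\gamma}(j)=\gamma^j(\gamma;q)_{m-j}\frac{(q;q)_m}{(q;q)_j(q;q)_{m-j}}$, $0\le j\le m$, and $\mathbf{p}_{+\infty,\gamma}(j)=\gamma^j(\gamma;q)_\infty/(q;q)_j$, $j\ge0$ (probability distributions). Configurations: $\vec{\mathsf{x}}=(\mathsf{x}_1>\ldots>\mathsf{x}_L)$ in $\mathbb{Z}$, with the convention $\mathsf{x}_0=+\infty$. Geometric $q$-TASEP move $\mathbf{G}_\alpha$ (rates $a_i$): each particle $i$ independently jumps to the right by $j$ with probability $\mathbf{p}_{\mathsf{x}_{i-1}-\mathsf{x}_i-1,\,a_i\alpha}(j)$. Bernoulli $q$-TASEP move $\mathbf{B}_\beta$: sequentially for $i=1,\ldots,L$, particle $i$ jumps right by one with probability $a_i\beta/(1+a_i\beta)$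 if $i=1$ or if particle $i-1$ has jumped in this move, and with probability $(1-q^{\mathsf{x}_{i-1}-\mathsf{x}_i-1})a_i\beta/(1+a_i\beta)$ otherwise (gaps measured before the move); else it stays. Vertex weights $\mathsf{L}_{u,a,\nu}(i_1,j_1;i_2,j_2)$, $i_1,i_2\in\mathbb{Z}_{\ge0}$, $j_1,j_2\in\{0,1\}$, vanish unless $i_1+j_1=i_2+j_2$, and for $g\in\mathbb{Z}_{\ge0}$: $\mathsf{L}(g,0;g,0)=\frac{1-auq^g}{1-au}$, $\mathsf{L}(g,0;g-1,1)=\frac{-au(1-q^g)}{1-au}$, $\mathsf{L}(g,1;g,1)=\frac{\nu q^g-au}{1-au}$, $\mathsf{L}(g,1;g+1,0)=\frac{1-\nu q^g}{1-au}$. Construction: given $\vec{\mathsf{x}}$, let $\vec{\mathsf{y}}$ be obtained by applying $\mathbf{B}_\beta$ and $\vec{\mathsf{x}}'$ by applying $\mathbf{G}_\alpha$, with independent randomness. Given $\mathsf{x}_{m-1},\mathsf{y}_{m-1},\mathsf{x}'_m$, set $i_1=\mathsf{x}_{m-1}-\mathsf{x}'_m-1$, $j_1=\mathsf{y}_{m-1}-\mathsf{x}_{m-1}$, sample $j_2\in\{0,1\}$ with probability $\mathsf{L}_{-\beta,a_m,\alpha a_m}(i_1,j_1;i_1+j_1-j_2,j_2)$, and set $\mathsf{y}^\dagger_m:=\mathsf{x}'_m+j_2$. For $m=1$, $\mathsf{x}_0=\mathsf{y}_0=+\infty$, $i_1=+\infty$ (with $q^{i_1}=0$), and $j_1$ may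 be taken $0$ or $1$ (the weights do not depend on this choice). Finally $\vec{\mathsf{y}}^{\,GB}$ is obtained from $\vec{\mathsf{x}}'$ by applying a further Bernoulli move $\mathbf{B}_\beta$ with randomness independent of everything above. *)

theory Defs
  imports "HOL-Probability.Probability"
begin

definition qpoch :: "real \<Rightarrow> real \<Rightarrow> nat \<Rightarrow> real" where
  "qpoch z q k = (\<Prod>i<k. 1 - z * q ^ i)"

definition qpoch_inf :: "real \<Rightarrow> real \<Rightarrow> real" where
  "qpoch_inf z q = (\<Prod>i. 1 - z * q ^ i)"

text \<open>Gaps live in nat option; None stands for +infinity.
  q to the power of a gap (q^infinity = 0).\<close>
definition qpow :: "real \<Rightarrow> nat option \<Rightarrow> real" where
  "qpow q g = (case g of None \<Rightarrow> 0 | Some n \<Rightarrow> q ^ n)"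

definition pgeo :: "real \<Rightarrow> real \<Rightarrow> nat option \<Rightarrow> nat \<Rightarrow> real" where
  "pgeo q \<gamma> g j = (case g of
      Some m \<Rightarrow> (if j \<le> m then \<gamma> ^ j * qpoch \<gamma> q (m - j) *
                   (qpoch q q m / (qpoch q q j * qpoch q q (m - j))) else 0)
    | None \<Rightarrow> \<gamma> ^ j * qpoch_inf \<gamma> q / qpoch q q j)"

definition geo_pmf :: "real \<Rightarrow> real \<Rightarrow> nat option \<Rightarrow> nat pmf" where
  "geo_pmf q \<gamma> g = embed_pmf (pgeo q \<gamma> g)"

text \<open>Configurations: x :: nat => int, particle i at x i for 1 <= i <= L
  (values at other indices are irrelevant). Gap in front of particle i,
  x_{i-1} - x_i - 1, with x_0 = +infinity.\<close>
definition gap :: "(nat \<Rightarrow> int) \<Rightarrow> nat \<Rightarrow> nat option" where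
  "gap x i = (if i \<le> 1 then None else Some (nat (x (i - 1) - x i - 1)))"

definition config :: "nat \<Rightarrow> (nat \<Rightarrow> int) \<Rightarrow> bool" where
  "config L x \<longleftrightarrow> (\<forall>i. 1 \<le> i \<longrightarrow> i < L \<longrightarrow> x (Suc i) < x i)"

definition geo_move :: "real \<Rightarrow> nat \<Rightarrow> (nat \<Rightarrow> real) \<Rightarrow> real \<Rightarrow> (nat \<Rightarrow> int) \<Rightarrow> (nat \<Rightarrow> int) pmf" where
  "geo_move q L a \<alpha> x =
     map_pmf (\<lambda>J i. x i + int (J i))
       (Pi_pmf {1..L} 0 (\<lambda>i. geo_pmf q (a i * \<alpha>) (gap x i)))"

fun bern_aux :: "real \<Rightarrow> (nat \<Rightarrow> real) \<Rightarrow> real \<Rightarrow> (nat \<Rightarrow> int) \<Rightarrow> nat \<Rightarrow> (nat \<Rightarrow> int) pmf" where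
  "bern_aux q a \<beta> x 0 = return_pmf x"
| "bern_aux q a \<beta> x (Suc n) =
     bind_pmf (bern_aux q a \<beta> x n) (\<lambda>y.
       let i = Suc n;
           r = a i * \<beta> / (1 + a i * \<beta>);
           pr = (if i = 1 \<or> y (i - 1) \<noteq> x (i - 1) then r
                 else (1 - q ^ nat (x (i - 1) - x i - 1)) * r)
       in map_pmf (\<lambda>b. y(i := x i + (if b then 1 else 0))) (bernoulli_pmf pr))"

definition bern_move :: "real \<Rightarrow> nat \<Rightarrow> (nat \<Rightarrow> real) \<Rightarrow> real \<Rightarrow> (nat \<Rightarrow> int) \<Rightarrow> (nat \<Rightarrow> int) pmf" where
  "bern_move q L a \<beta> x = bern_aux q a \<beta> x L"

text \<open>Vertex weights L_{u,a,nu}(i1,j1; i1+j1-j2, j2), indexed by (i1,j1,j2);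
  i1 may be +infinity (None), in which case q^{i1} = 0.\<close>
definition Lw :: "real \<Rightarrow> real \<Rightarrow> real \<Rightarrow> real \<Rightarrow> nat option \<Rightarrow> nat \<Rightarrow> nat \<Rightarrow> real" where
  "Lw q u a \<nu> i1 j1 j2 =
     (let g = qpow q i1 in
      if j1 = 0 \<and> j2 = 0 then (1 - a * u * g) / (1 - a * u)
      else if j1 = 0 \<and> j2 = 1 then - a * u * (1 - g) / (1 - a * u)
      else if j1 = 1 \<and> j2 = 1 then (\<nu> * g - a * u) / (1 - a * u)
      else if j1 = 1 \<and> j2 = 0 then (1 - \<nu> * g) / (1 - a * u)
      else 0)"

definition dagger_pair :: "real \<Rightarrow> nat \<Rightarrow> (nat \<Rightarrow> real) \<Rightarrow> real \<Rightarrow> real \<Rightarrow> (nat \<Rightarrow> int) \<Rightarrow> nat \<Rightarrow> (int \<times> int) pmf" where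
  "dagger_pair q L a \<alpha> \<beta> x m =
     bind_pmf (pair_pmf (bern_move q L a \<beta> x) (geo_move q L a \<alpha> x)) (\<lambda>(y, x').
       let i1 = (if m = 1 then None else Some (nat (x (m - 1) - x' m - 1)));
           j1 = (if m = 1 then 0 else nat (y (m - 1) - x (m - 1)))
       in map_pmf (\<lambda>b. (x' m, x' m + (if b then 1 else 0)))
            (bernoulli_pmf (Lw q (- \<beta>) (a m) (\<alpha> * a m) i1 j1 1)))"

definition GB_pair :: "real \<Rightarrow> nat \<Rightarrow> (nat \<Rightarrow> real) \<Rightarrow> real \<Rightarrow> real \<Rightarrow> (nat \<Rightarrow> int) \<Rightarrow> nat \<Rightarrow> (int \<times> int) pmf" where
  "GB_pair q L a \<alpha> \<beta> x m =
     bind_pmf (geo_move q L a \<alpha> x) (\<lambda>x'.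
       map_pmf (\<lambda>y. (x' m, y m)) (bern_move q L a \<beta> x'))"

end

theory Submission
  imports Defs
begin
lemma qpoch_Suc: "qpoch z q (Suc n) = qpoch z q n * (1 - z * q ^ n)"
  by (simp add: qpoch_def)

lemma qpoch_0[simp]: "qpoch z q 0 = 1"
  by (simp add: qpoch_def)

lemma qpoch_pos: "0 \<le> z \<Longrightarrow> z < 1 \<Longrightarrow> 0 \<le> q \<Longrightarrow> q \<le> 1 \<Longrightarrow> 0 < qpoch z q n"
proof (induction n)
  case (Suc n)
  have "z * q ^ n \<le> z * 1" using Suc.prems by (intro mult_left_mono power_le_one) auto
  then show ?case using Suc by (simp add: qpoch_Suc)
qed simp

lemma qqpoch_pos: "0 < q \<Longrightarrow> q < 1 \<Longrightarrow> 0 < qpoch q q n"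
proof (induction n)
  case (Suc n)
  have "q * q ^ n < 1" using Suc.prems
    by (metis power_Suc power_strict_mono less_eq_real_def power_one zero_less_Suc) 
  then show ?case using Suc by (simp add: qpoch_Suc)
qed simp

definition cw :: "real \<Rightarrow> real \<Rightarrow> nat \<Rightarrow> nat \<Rightarrow> real" where
  "cw q \<gamma> g j = \<gamma> ^ j * qpoch \<gamma> q (g - j) * (qpoch q q g / (qpoch q q j * qpoch q q (g - j)))"

lemma cw_step:
  assumes q: "0 < q" "q < 1" and j: "j \<le> Suc g"
  shows "cw q \<gamma> (Suc g) j = (if j \<le> g then cw q \<gamma> g j * (1 - \<gamma> * q ^ (g - j)) else 0)
      + (if 1 \<le> j then cw q \<gamma> g (j - 1) * \<gamma> * q ^ (Suc g - j) else 0)"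
proof -
  have P: "\<And>n. qpoch q q n \<noteq> 0" using qqpoch_pos[OF q] by (metis less_irrefl)
  have "q * q ^ g < 1" using power_Suc_less_one[OF q, of g] by simp
  then have qg: "q * q ^ g \<noteq> 1" by simp
  consider "j = 0" | "j = Suc g" | i k where "j = Suc i" "g = Suc (i + k)"
  proof -
    assume c1: "j = 0 \<Longrightarrow> thesis" and c2: "j = Suc g \<Longrightarrow> thesis"
      and c3: "\<And>i k. j = Suc i \<Longrightarrow> g = Suc (i + k) \<Longrightarrow> thesis"
    show thesis
    proof (cases j)
      case 0 then show ?thesis by (rule c1)
    next
      case (Suc i)
      show ?thesis
      proof (cases "j = Suc g")
        case True then show ?thesis by (rule c2)
      next
        case False
        then have "g = Suc (i + (g - Suc i))" using j Suc by simp
        then show ?thesis using c3 Suc by blast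
      qed
    qed
  qed
  then show ?thesis
  proof cases
    case 1 then show ?thesis using P qg by (simp add: cw_def qpoch_Suc)
  next
    case 2 then show ?thesis using P qg by (simp add: cw_def qpoch_Suc)
  next
    case 3
    define Pn where "Pn = qpoch q q (Suc (i + k))"
    define u where "u = q ^ Suc i"
    define v where "v = q ^ Suc k"
    have e1: "Suc g - j = Suc k" "g - j = k" "g - (j - 1) = Suc k" "j - 1 = i" using 3 by auto
    have a1: "1 - u \<noteq> 0" "1 - v \<noteq> 0" unfolding u_def v_def
      using power_Suc_less_one[OF q, of i] power_Suc_less_one[OF q, of k] by auto
    have Pi: "qpoch q q i \<noteq> 0" "qpoch q q k \<noteq> 0" using P by auto
    have L0: "cw q \<gamma> (Suc g) j = \<gamma> ^ Suc i * qpoch \<gamma> q (Suc k) *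
       (qpoch q q (Suc (Suc (i + k))) / (qpoch q q (Suc i) * qpoch q q (Suc k)))"
      unfolding cw_def 3 by simp
    have R10: "cw q \<gamma> g j = \<gamma> ^ Suc i * qpoch \<gamma> q k *
       (qpoch q q (Suc (i + k)) / (qpoch q q (Suc i) * qpoch q q k))"
      unfolding cw_def 3 by simp
    have R20: "cw q \<gamma> g (j - 1) = \<gamma> ^ i * qpoch \<gamma> q (Suc k) *
       (qpoch q q (Suc (i + k)) / (qpoch q q i * qpoch q q (Suc k)))"
      unfolding cw_def 3 by simp
    have s2: "qpoch q q (Suc (Suc (i + k))) = Pn * (1 - u * v)"
      unfolding Pn_def u_def v_def qpoch_Suc[of q q "Suc (i + k)"] by (simp add: power_add mult_ac)
    have s3: "qpoch q q (Suc i) = qpoch q q i * (1 - u)" unfolding u_def qpoch_Suc by simp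
    have s4: "qpoch q q (Suc k) = qpoch q q k * (1 - v)" unfolding v_def qpoch_Suc by simp
    have L: "cw q \<gamma> (Suc g) j = \<gamma> ^ Suc i * (qpoch \<gamma> q k * (1 - \<gamma> * q ^ k)) *
       (Pn * (1 - u * v) / ((qpoch q q i * (1 - u)) * (qpoch q q k * (1 - v))))"
      unfolding L0 s2 s3 s4 qpoch_Suc[of \<gamma> q k] ..
    have R1: "cw q \<gamma> g j = \<gamma> ^ Suc i * qpoch \<gamma> q k * (Pn / ((qpoch q q i * (1 - u)) * qpoch q q k))"
      unfolding R10 s3 Pn_def ..
    have R2: "cw q \<gamma> g (j - 1) = \<gamma> ^ i * (qpoch \<gamma> q k * (1 - \<gamma> * q ^ k)) * (Pn / (qpoch q q i * (qpoch q q k * (1 - v))))"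
      unfolding R20 s4 Pn_def qpoch_Suc[of \<gamma> q k] ..
    define W where "W = Pn / (qpoch q q i * qpoch q q k)"
    have f1: "Pn * (1 - u * v) / ((qpoch q q i * (1 - u)) * (qpoch q q k * (1 - v))) = W * (1 - u * v) / ((1 - u) * (1 - v))"
      unfolding W_def by (simp add: mult_ac)
    have f2: "Pn / ((qpoch q q i * (1 - u)) * qpoch q q k) = W / (1 - u)"
      unfolding W_def by (simp add: mult_ac)
    have f3: "Pn / (qpoch q q i * (qpoch q q k * (1 - v))) = W / (1 - v)"
      unfolding W_def by (simp add: mult_ac)
    have F: "\<gamma> ^ Suc i * (Qk * c) * (W * (1 - u * v) / ((1 - u) * (1 - v)))
       = \<gamma> ^ Suc i * Qk * (W / (1 - u)) * c + \<gamma> ^ i * (Qk * c) * (W / (1 - v)) * \<gamma> * v" for Qk c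
    proof -
      have "W * (1 - u * v) / ((1 - u) * (1 - v)) = W / (1 - u) + W / (1 - v) * v"
        using a1 by (simp add: field_simps)
      then show ?thesis by (simp add: algebra_simps)
    qed
    show ?thesis unfolding L R1 R2 f1 f2 f3 using 3 e1 F by (simp add: v_def)
  qed
qed

lemma cw_sum_step:
  assumes q: "0 < q" "q < 1"
  shows "(\<Sum>j\<le>Suc g. cw q \<gamma> (Suc g) j * h j) =
    (\<Sum>i\<le>g. cw q \<gamma> g i * ((1 - \<gamma> * q ^ (g - i)) * h i + \<gamma> * q ^ (g - i) * h (Suc i)))"
proof -
  define A where "A j = (if j \<le> g then cw q \<gamma> g j * (1 - \<gamma> * q ^ (g - j)) * h j else 0)" for j
  define B where "B j = (if 1 \<le> j then cw q \<gamma> g (j - 1) * \<gamma> * q ^ (Suc g - j) * h j else 0)" for j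
  have 1: "(\<Sum>j\<le>Suc g. cw q \<gamma> (Suc g) j * h j) = (\<Sum>j\<le>Suc g. A j + B j)"
  proof (rule sum.cong[OF refl])
    fix j assume "j \<in> {..Suc g}"
    then have j: "j \<le> Suc g" by simp
    show "cw q \<gamma> (Suc g) j * h j = A j + B j"
      using cw_step[OF q j, of \<gamma>] unfolding A_def B_def by (simp add: distrib_right)
  qed
  have 2: "(\<Sum>j\<le>Suc g. A j) = (\<Sum>j\<le>g. cw q \<gamma> g j * (1 - \<gamma> * q ^ (g - j)) * h j)"
    by (simp add: sum.atMost_Suc A_def)
  have 3: "(\<Sum>j\<le>Suc g. B j) = (\<Sum>i\<le>g. cw q \<gamma> g i * \<gamma> * q ^ (g - i) * h (Suc i))"
    by (subst sum.atMost_Suc_shift) (simp add: B_def)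
  have 4: "(\<Sum>i\<le>g. cw q \<gamma> g i * ((1 - \<gamma> * q ^ (g - i)) * h i + \<gamma> * q ^ (g - i) * h (Suc i)))
     = (\<Sum>i\<le>g. cw q \<gamma> g i * (1 - \<gamma> * q ^ (g - i)) * h i + cw q \<gamma> g i * \<gamma> * q ^ (g - i) * h (Suc i))"
    by (intro sum.cong refl) (simp add: distrib_left mult.assoc)
  show ?thesis unfolding 1 4 sum.distrib 2 3 ..
qed

lemma cw_sum1:
  assumes q: "0 < q" "q < 1"
  shows "(\<Sum>j\<le>g. cw q \<gamma> g j) = 1"
proof (induction g)
  case 0 then show ?case by (simp add: cw_def)
next
  case (Suc g)
  have "(\<Sum>j\<le>Suc g. cw q \<gamma> (Suc g) j) = (\<Sum>j\<le>Suc g. cw q \<gamma> (Suc g) j * 1)" by simp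
  also have "\<dots> = (\<Sum>i\<le>g. cw q \<gamma> g i)"
    by (subst cw_sum_step[OF q]) (simp add: algebra_simps)
  finally show ?case using Suc by simp
qed

lemma cw_sumq:
  assumes q: "0 < q" "q < 1"
  shows "(\<Sum>j\<le>g. cw q \<gamma> g j * q ^ j) = 1 - \<gamma> + \<gamma> * q ^ g"
proof (induction g)
  case 0 then show ?case by (simp add: cw_def)
next
  case (Suc g)
  have e: "\<And>i. i \<le> g \<Longrightarrow> cw q \<gamma> g i * ((1 - \<gamma> * q ^ (g - i)) * q ^ i + \<gamma> * q ^ (g - i) * q ^ Suc i)
      = cw q \<gamma> g i * q ^ i - \<gamma> * (1 - q) * q ^ g * cw q \<gamma> g i"
  proof -
    fix i assume "i \<le> g"
    then have "q ^ (g - i) * q ^ i = q ^ g" by (simp add: power_add[symmetric])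
    then show "?thesis i" by (simp add: algebra_simps)  
  qed
  have "(\<Sum>j\<le>Suc g. cw q \<gamma> (Suc g) j * q ^ j) =
     (\<Sum>i\<le>g. cw q \<gamma> g i * q ^ i - \<gamma> * (1 - q) * q ^ g * cw q \<gamma> g i)"
    by (subst cw_sum_step[OF q]) (intro sum.cong refl e, simp)
  also have "\<dots> = (1 - \<gamma> + \<gamma> * q ^ g) - \<gamma> * (1 - q) * q ^ g * 1"
    by (simp add: sum_subtractf sum_distrib_left[symmetric] Suc cw_sum1[OF q])
  finally show ?case by (simp add: algebra_simps)
qed

definition Fs :: "real \<Rightarrow> real \<Rightarrow> real" where
  "Fs q z = (\<Sum>n. (1 / qpoch q q n) * z ^ n)"

lemma Fs_summable:
  assumes q: "0 < q" "q < 1" and z: "0 \<le> z" "z < 1"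
  shows "summable (\<lambda>n. (1 / qpoch q q n) * z ^ n)"
proof -
  define c where "c = (1 + z) / 2"
  define e where "e = (1 - z) / (1 + z)"
  have e0: "e > 0" using z by (simp add: e_def)
  obtain N where N: "q ^ N < e" using real_arch_pow_inv[OF e0 q(2)] by blast
  have ce: "c * (1 - e) = z" using z by (simp add: c_def e_def field_simps)
  have c1: "c < 1" using z by (simp add: c_def)
  show ?thesis
  proof (rule summable_ratio_test[OF c1, of N])
    fix n assume n: "N \<le> n"
    have P: "0 < qpoch q q n" by (rule qqpoch_pos[OF q])
    have t1: "q ^ Suc n \<le> q ^ N" using q n by (intro power_decreasing) auto
    have t0: "q ^ Suc n < 1" using power_Suc_less_one[OF q] .
    have "z \<le> c * (1 - q ^ Suc n)"
    proof -
      have "c * (1 - e) \<le> c * (1 - q ^ Suc n)" using t1 N z by (intro mult_left_mono) (auto simp: c_def)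
      then show ?thesis using ce by simp
    qed
    then have r: "z / (1 - q ^ Suc n) \<le> c" using t0 by (simp add: divide_le_eq mult.commute)
    have eq: "1 / qpoch q q (Suc n) * z ^ Suc n = (1 / qpoch q q n * z ^ n) * (z / (1 - q ^ Suc n))"
      by (simp add: qpoch_Suc)
    have nn: "0 \<le> 1 / qpoch q q n * z ^ n" using P z by simp
    have nn2: "0 \<le> z / (1 - q ^ Suc n)" using t0 z by simp
    show "norm (1 / qpoch q q (Suc n) * z ^ Suc n) \<le> c * norm (1 / qpoch q q n * z ^ n)"
      unfolding eq
    proof -
      have "norm ((1 / qpoch q q n * z ^ n) * (z / (1 - q ^ Suc n))) = (1 / qpoch q q n * z ^ n) * (z / (1 - q ^ Suc n))"
        by (simp only: real_norm_def abs_of_nonneg[OF mult_nonneg_nonneg[OF nn nn2]])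
      also have "\<dots> \<le> (1 / qpoch q q n * z ^ n) * c" by (rule mult_left_mono[OF r nn])
      also have "\<dots> = c * norm (1 / qpoch q q n * z ^ n)"
        unfolding real_norm_def abs_of_nonneg[OF nn] by (rule mult.commute)
      finally show "norm ((1 / qpoch q q n * z ^ n) * (z / (1 - q ^ Suc n))) \<le> c * norm (1 / qpoch q q n * z ^ n)" .
    qed
  qed
qed

lemma Fs_functional:
  assumes q: "0 < q" "q < 1" and z: "0 \<le> z" "z < 1"
  shows "Fs q (q * z) = (1 - z) * Fs q z"
proof -
  let ?f = "\<lambda>n. (1 / qpoch q q n) * z ^ n"
  have s: "summable ?f" by (rule Fs_summable[OF q z])
  have "q * z \<le> 1 * z" using q z by (intro mult_right_mono) auto
  then have qz: "0 \<le> q * z" "q * z < 1" using q z by auto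
  have s2: "summable (\<lambda>n. (1 / qpoch q q n) * (q * z) ^ n)" by (rule Fs_summable[OF q qz])
  have h1: "(\<Sum>n. ?f (Suc n)) = Fs q z - 1"
    using suminf_split_head[OF s] by (simp add: Fs_def)
  have h2: "(\<Sum>n. (1 / qpoch q q (Suc n)) * (q * z) ^ Suc n) = Fs q (q * z) - 1"
    using suminf_split_head[OF s2] by (simp add: Fs_def)
  have sz: "summable (\<lambda>n. z * ?f n)" using summable_mult[OF s] by simp
  have sS: "summable (\<lambda>n. ?f (Suc n))" by (rule iffD2[OF summable_Suc_iff s])
  have key: "\<And>n. (1 / qpoch q q (Suc n)) * (q * z) ^ Suc n = ?f (Suc n) - z * ?f n"
  proof -
    fix n
    have P: "0 < qpoch q q n" by (rule qqpoch_pos[OF q])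
    have t0: "q ^ Suc n < 1" using power_Suc_less_one[OF q] .
    have t0': "q * q ^ n \<noteq> 1" using t0 by simp
    show "?thesis n" using P t0' by (simp add: qpoch_Suc field_simps power_mult_distrib)
  qed
  have "(\<Sum>n. (1 / qpoch q q (Suc n)) * (q * z) ^ Suc n) = (\<Sum>n. ?f (Suc n)) - (\<Sum>n. z * ?f n)"
    unfolding key by (rule suminf_diff[OF sS sz, symmetric])
  also have "(\<Sum>n. z * ?f n) = z * Fs q z" unfolding Fs_def by (rule suminf_mult[OF s])
  finally show ?thesis using h1 h2 by (simp add: algebra_simps)
qed

lemma Fs_partial:
  assumes q: "0 < q" "q < 1" and z: "0 \<le> z" "z < 1"
  shows "(\<Prod>i<n. 1 - z * q ^ i) * Fs q z = Fs q (q ^ n * z)"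
proof (induction n)
  case 0 then show ?case by simp
next
  case (Suc n)
  have "q ^ n * z \<le> 1 * z" using q z by (intro mult_right_mono power_le_one) auto
  then have w: "0 \<le> q ^ n * z" "q ^ n * z < 1" using q z by auto
  have "(\<Prod>i<Suc n. 1 - z * q ^ i) * Fs q z = (1 - q ^ n * z) * ((\<Prod>i<n. 1 - z * q ^ i) * Fs q z)"
    by (simp add: algebra_simps)
  also have "\<dots> = Fs q (q * (q ^ n * z))" unfolding Suc Fs_functional[OF q w] ..
  finally show ?case by (simp add: mult.assoc)
qed

lemma Fs_pos:
  assumes q: "0 < q" "q < 1" and z: "0 < z" "z < 1"
  shows "0 < Fs q z"
  unfolding Fs_def using Fs_summable[OF q _ z(2)] z qqpoch_pos[OF q]
  by (intro suminf_pos) auto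

lemma Fs_tendsto:
  assumes q: "0 < q" "q < 1"
  shows "(\<lambda>n. Fs q (q ^ n * z)) \<longlonglongrightarrow> 1"
proof -
  have s: "summable (\<lambda>n. (1 / qpoch q q n) * (1/2::real) ^ n)"
    by (rule Fs_summable[OF q]) auto
  have c: "isCont (\<lambda>x. \<Sum>n. (1 / qpoch q q n) * x ^ n) 0"
    by (rule isCont_powser[OF s]) simp
  have l: "(\<lambda>n. q ^ n * z) \<longlonglongrightarrow> 0"
    using q by (intro tendsto_mult_left_zero LIMSEQ_power_zero) simp
  have "(\<lambda>n. Fs q (q ^ n * z)) \<longlonglongrightarrow> Fs q 0"
    unfolding Fs_def by (rule isCont_tendsto_compose[OF c l])
  moreover have "Fs q 0 = 1" unfolding Fs_def using powser_zero[of "\<lambda>n. 1 / qpoch q q n"] by simp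
  ultimately show ?thesis by simp
qed

lemma qpoch_inf_Fs:
  assumes q: "0 < q" "q < 1" and z: "0 < z" "z < 1"
  shows "qpoch_inf z q = 1 / Fs q z"
proof -
  have F: "0 < Fs q z" by (rule Fs_pos[OF q z])
  have "(\<lambda>n. (\<Prod>i<n. 1 - z * q ^ i)) = (\<lambda>n. Fs q (q ^ n * z) / Fs q z)"
    using Fs_partial[OF q less_imp_le[OF z(1)] z(2)] F by (auto simp: field_simps)
  moreover have "(\<lambda>n. Fs q (q ^ n * z) / Fs q z) \<longlonglongrightarrow> 1 / Fs q z"
    by (intro tendsto_divide Fs_tendsto[OF q] tendsto_const) (use F in auto)
  ultimately have "(\<lambda>n. (\<Prod>i<n. 1 - z * q ^ i)) \<longlonglongrightarrow> 1 / Fs q z" by simp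
  then show ?thesis unfolding qpoch_inf_def
    by (rule prodinf_eq_prod_lim') (use F in simp)
qed

lemma embed_pmf_nat:
  fixes f :: "nat \<Rightarrow> real"
  assumes nn: "\<And>j. 0 \<le> f j" and s: "f sums 1"
  shows "pmf (embed_pmf f) j = f j"
proof -
  have "(\<integral>\<^sup>+x. ennreal (f x) \<partial>count_space UNIV) = (\<Sum>i. ennreal (f i))"
    by (rule nn_integral_count_space_nat)
  also have "\<dots> = ennreal 1" by (rule suminf_ennreal_eq[OF nn s])
  finally have "(\<integral>\<^sup>+x. ennreal (f x) \<partial>count_space UNIV) = 1" by simp
  then show ?thesis by (rule pmf_embed_pmf[OF nn])
qed

lemma expect_sums:
  fixes M :: "nat pmf" and f :: "nat \<Rightarrow> real"
  assumes nn: "\<And>j. 0 \<le> f j" and s: "(\<lambda>j. pmf M j * f j) sums s"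
  shows "measure_pmf.expectation M f = s"
proof -
  have "measure_pmf.expectation M f = integral\<^sup>L (count_space UNIV) (\<lambda>j. pmf M j * f j)"
    by (subst measure_pmf_eq_density, subst integral_density) auto
  also have "\<dots> = (\<Sum>j. pmf M j * f j)"
  proof (rule integral_count_space_nat)
    have "summable (\<lambda>j. pmf M j * f j)" using s by (rule sums_summable)
    moreover have "(\<lambda>j. norm (pmf M j * f j)) = (\<lambda>j. pmf M j * f j)"
      using nn by (simp add: abs_mult)
    ultimately show "integrable (count_space UNIV) (\<lambda>j. pmf M j * f j)"
      by (simp add: integrable_count_space_nat_iff)
  qed
  also have "\<dots> = s" using s by (rule sums_unique[symmetric])
  finally show ?thesis .
qed

locale qg =
  fixes q \<gamma> :: real
  assumes q0: "0 < q" and q1: "q < 1" and g0: "0 < \<gamma>" and g1: "\<gamma> < 1"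
begin

lemma pgeo_Some: "pgeo q \<gamma> (Some g) j = (if j \<le> g then cw q \<gamma> g j else 0)"
  by (simp add: pgeo_def cw_def)

lemma pgeo_None: "pgeo q \<gamma> None = (\<lambda>j. (1 / Fs q \<gamma>) * ((1 / qpoch q q j) * \<gamma> ^ j))"
  using qpoch_inf_Fs[OF q0 q1 g0 g1] by (auto simp: pgeo_def fun_eq_iff)

lemma pgeo_nonneg: "0 \<le> pgeo q \<gamma> g j"
proof (cases g)
  case None
  then show ?thesis using Fs_pos[OF q0 q1 g0 g1] qqpoch_pos[OF q0 q1, of j] g0
    by (simp add: pgeo_None)
next
  case (Some n)
  have "0 \<le> cw q \<gamma> n j" unfolding cw_def
    using qqpoch_pos[OF q0 q1] qpoch_pos[of \<gamma> q] q0 q1 g0 g1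
    by (intro mult_nonneg_nonneg divide_nonneg_nonneg) (auto intro: less_imp_le)
  then show ?thesis using Some by (simp add: pgeo_Some)
qed

lemma pgeo_sums: "pgeo q \<gamma> g sums 1"
proof (cases g)
  case None
  have s: "(\<lambda>j. (1 / qpoch q q j) * \<gamma> ^ j) sums Fs q \<gamma>"
    unfolding Fs_def using Fs_summable[OF q0 q1 less_imp_le[OF g0] g1] by (rule summable_sums)
  have "(\<lambda>j. (1 / Fs q \<gamma>) * ((1 / qpoch q q j) * \<gamma> ^ j)) sums ((1 / Fs q \<gamma>) * Fs q \<gamma>)"
    by (rule sums_mult[OF s])
  then show ?thesis using None Fs_pos[OF q0 q1 g0 g1] by (simp add: pgeo_None)
next
  case (Some n)
  have "(\<lambda>j. if j \<le> n then cw q \<gamma> n j else 0) sums (\<Sum>j\<in>{..n}. if j \<le> n then cw q \<gamma> n j else 0)"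
    by (rule sums_finite) auto
  also have "(\<Sum>j\<in>{..n}. if j \<le> n then cw q \<gamma> n j else 0) = 1"
    using cw_sum1[OF q0 q1, of \<gamma> n] by simp
  moreover have "pgeo q \<gamma> (Some n) = (\<lambda>j. if j \<le> n then cw q \<gamma> n j else 0)"
    by (rule ext) (rule pgeo_Some)
  ultimately show ?thesis using Some by simp
qed

lemma pgeo_q_sums: "(\<lambda>j. pgeo q \<gamma> g j * q ^ j) sums (1 - \<gamma> * (1 - qpow q g))"
proof (cases g)
  case None
  have h: "q * \<gamma> < 1 * \<gamma>" using q1 g0 by (rule mult_strict_right_mono)
  have qz: "0 \<le> q * \<gamma>" "q * \<gamma> < 1" using q0 g0 g1 h by (simp, linarith)
  have s: "(\<lambda>j. (1 / qpoch q q j) * (q * \<gamma>) ^ j) sums Fs q (q * \<gamma>)"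
    unfolding Fs_def using Fs_summable[OF q0 q1 qz] by (rule summable_sums)
  have "(\<lambda>j. (1 / Fs q \<gamma>) * ((1 / qpoch q q j) * (q * \<gamma>) ^ j)) sums ((1 / Fs q \<gamma>) * Fs q (q * \<gamma>))"
    by (rule sums_mult[OF s])
  moreover have "(1 / Fs q \<gamma>) * Fs q (q * \<gamma>) = 1 - \<gamma>"
    using Fs_functional[OF q0 q1 less_imp_le[OF g0] g1] Fs_pos[OF q0 q1 g0 g1] by simp
  moreover have "(\<lambda>j. pgeo q \<gamma> g j * q ^ j) = (\<lambda>j. (1 / Fs q \<gamma>) * ((1 / qpoch q q j) * (q * \<gamma>) ^ j))"
    using None by (simp add: pgeo_None power_mult_distrib fun_eq_iff)
  ultimately show ?thesis using None by (simp add: qpow_def)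
next
  case (Some n)
  have "(\<lambda>j. (if j \<le> n then cw q \<gamma> n j else 0) * q ^ j) sums (\<Sum>j\<in>{..n}. (if j \<le> n then cw q \<gamma> n j else 0) * q ^ j)"
    by (rule sums_finite) auto
  also have "(\<Sum>j\<in>{..n}. (if j \<le> n then cw q \<gamma> n j else 0) * q ^ j) = 1 - \<gamma> + \<gamma> * q ^ n"
    using cw_sumq[OF q0 q1, of \<gamma> n] by simp
  finally show ?thesis using Some by (simp add: pgeo_Some qpow_def algebra_simps)
qed

lemma pmf_geo: "pmf (geo_pmf q \<gamma> g) j = pgeo q \<gamma> g j"
  unfolding geo_pmf_def by (rule embed_pmf_nat[OF pgeo_nonneg pgeo_sums])

lemma geo_expect: "measure_pmf.expectation (geo_pmf q \<gamma> g) (\<lambda>j. q ^ j) = 1 - \<gamma> * (1 - qpow q g)"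
  by (rule expect_sums) (use q0 pgeo_q_sums in \<open>simp_all add: pmf_geo\<close>)

lemma geo_set: "j \<in> set_pmf (geo_pmf q \<gamma> (Some n)) \<Longrightarrow> j \<le> n"
  by (auto simp: set_pmf_iff pmf_geo pgeo_Some split: if_splits)

end

definition rr :: "(nat \<Rightarrow> real) \<Rightarrow> real \<Rightarrow> nat \<Rightarrow> real" where
  "rr a \<beta> i = a i * \<beta> / (1 + a i * \<beta>)"

fun Bj :: "real \<Rightarrow> (nat \<Rightarrow> real) \<Rightarrow> real \<Rightarrow> (nat \<Rightarrow> int) \<Rightarrow> nat \<Rightarrow> bool pmf" where
  "Bj q a \<beta> x 0 = return_pmf False"
| "Bj q a \<beta> x (Suc n) = (if n = 0 then bernoulli_pmf (rr a \<beta> 1) else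
     bind_pmf (Bj q a \<beta> x n) (\<lambda>b. bernoulli_pmf (if b then rr a \<beta> (Suc n)
        else (1 - q ^ nat (x n - x (Suc n) - 1)) * rr a \<beta> (Suc n))))"

lemma bern_frame:
  assumes "n \<le> N"
  shows "map_pmf (\<lambda>y. y n) (bern_aux q a \<beta> x N) = map_pmf (\<lambda>y. y n) (bern_aux q a \<beta> x n)"
  using assms
proof (induction N)
  case 0 then show ?case by simp
next
  case (Suc N)
  show ?case
  proof (cases "n = Suc N")
    case True then show ?thesis by simp
  next
    case False
    then have nN: "n \<le> N" "n \<noteq> Suc N" using Suc.prems by auto
    have "map_pmf (\<lambda>y. y n) (bern_aux q a \<beta> x (Suc N)) = map_pmf (\<lambda>y. y n) (bern_aux q a \<beta> x N)"
      using nN(2) by (simp add: map_bind_pmf pmf.map_comp o_def Let_def map_pmf_def[of "\<lambda>y. y n" "bern_aux q a \<beta> x N"])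
    then show ?thesis using Suc.IH[OF nN(1)] by simp
  qed
qed

lemma bern_step:
  assumes "1 \<le> n"
  shows "bern_aux q a \<beta> x (Suc n) = bind_pmf (bern_aux q a \<beta> x n) (\<lambda>y.
     map_pmf (\<lambda>b. y(Suc n := x (Suc n) + (if b then 1 else 0)))
       (bernoulli_pmf (if y n \<noteq> x n then rr a \<beta> (Suc n) else (1 - q ^ nat (x n - x (Suc n) - 1)) * rr a \<beta> (Suc n))))"
  unfolding bern_aux.simps Let_def rr_def diff_Suc_1 using assms by simp

lemma bern_marg0:
  assumes "1 \<le> n"
  shows "map_pmf (\<lambda>y. y n) (bern_aux q a \<beta> x n) = map_pmf (\<lambda>b. x n + (if b then 1 else 0)) (Bj q a \<beta> x n)"
  using assms
proof (induction n)
  case 0 then show ?case by simp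
next
  case (Suc n)
  show ?case
  proof (cases "n = 0")
    case True
    then show ?thesis by (simp add: bind_return_pmf pmf.map_comp o_def rr_def)
  next
    case False
    define G where "G v = map_pmf (\<lambda>b. x (Suc n) + (if b then 1 else 0))
        (bernoulli_pmf (if v \<noteq> x n then rr a \<beta> (Suc n) else (1 - q ^ nat (x n - x (Suc n) - 1)) * rr a \<beta> (Suc n)))" for v
    have "map_pmf (\<lambda>y. y (Suc n)) (bern_aux q a \<beta> x (Suc n)) = bind_pmf (bern_aux q a \<beta> x n) (\<lambda>y. G (y n))"
      using False by (subst bern_step) (simp_all add: map_bind_pmf pmf.map_comp o_def G_def)
    also have "\<dots> = bind_pmf (map_pmf (\<lambda>y. y n) (bern_aux q a \<beta> x n)) G"
      by (simp add: bind_map_pmf)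
    also have "\<dots> = bind_pmf (map_pmf (\<lambda>b. x n + (if b then 1 else 0)) (Bj q a \<beta> x n)) G"
      using Suc.IH False by simp
    also have "\<dots> = bind_pmf (Bj q a \<beta> x n) (\<lambda>b. G (x n + (if b then 1 else 0)))"
      by (simp add: bind_map_pmf)
    also have "\<dots> = map_pmf (\<lambda>b. x (Suc n) + (if b then 1 else 0)) (Bj q a \<beta> x (Suc n))"
      using False by (auto simp: map_bind_pmf G_def intro!: bind_pmf_cong)
    finally show ?thesis .
  qed
qed

lemma bern_marg:
  assumes "1 \<le> n" "n \<le> N"
  shows "map_pmf (\<lambda>y. y n) (bern_aux q a \<beta> x N) = map_pmf (\<lambda>b. x n + (if b then 1 else 0)) (Bj q a \<beta> x n)"
  using bern_frame[OF assms(2)] bern_marg0[OF assms(1)] by simp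

lemma Bj_local:
  assumes "\<And>i. i \<le> n \<Longrightarrow> x i = x' i"
  shows "Bj q a \<beta> x n = Bj q a \<beta> x' n"
  using assms
proof (induction n)
  case 0 then show ?case by simp
next
  case (Suc n)
  have "Bj q a \<beta> x n = Bj q a \<beta> x' n" using Suc by simp
  moreover have "x n - x (Suc n) = x' n - x' (Suc n)" using Suc.prems by auto
  ultimately show ?case by (simp only: Bj.simps)
qed

lemma bind_bernoulli:
  assumes h: "\<And>z. z \<in> set_pmf M \<Longrightarrow> 0 \<le> h z \<and> h z \<le> 1"
  shows "bind_pmf M (\<lambda>z. bernoulli_pmf (h z)) = bernoulli_pmf (measure_pmf.expectation M h)"
proof -
  have int: "integrable M h"
    by (rule measure_pmf.integrable_const_bound[where B=1]) (use h in \<open>auto intro!: AE_pmfI\<close>)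
  have E0: "0 \<le> measure_pmf.expectation M h"
    by (rule integral_nonneg_AE) (use h in \<open>auto intro!: AE_pmfI\<close>)
  have "measure_pmf.expectation M h \<le> measure_pmf.expectation M (\<lambda>_. 1)"
    by (rule integral_mono_AE[OF int]) (use h in \<open>auto intro!: AE_pmfI\<close>)
  then have E1: "measure_pmf.expectation M h \<le> 1" by simp
  show ?thesis
  proof (rule pmf_eqI)
    fix b :: bool
    show "pmf (bind_pmf M (\<lambda>z. bernoulli_pmf (h z))) b = pmf (bernoulli_pmf (measure_pmf.expectation M h)) b"
    proof (cases b)
      case True
      have "pmf (bind_pmf M (\<lambda>z. bernoulli_pmf (h z))) b = (\<integral>z. pmf (bernoulli_pmf (h z)) True \<partial>M)"
        using True by (simp add: pmf_bind)
      also have "\<dots> = (\<integral>z. h z \<partial>M)"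
        by (rule integral_cong_AE) (use h in \<open>auto intro!: AE_pmfI\<close>)
      finally show ?thesis using True E0 E1 by simp
    next
      case False
      have "pmf (bind_pmf M (\<lambda>z. bernoulli_pmf (h z))) b = (\<integral>z. pmf (bernoulli_pmf (h z)) False \<partial>M)"
        using False by (simp add: pmf_bind)
      also have "\<dots> = (\<integral>z. 1 - h z \<partial>M)"
        by (rule integral_cong_AE) (use h in \<open>auto intro!: AE_pmfI\<close>)
      also have "\<dots> = 1 - (\<integral>z. h z \<partial>M)"
        using Bochner_Integration.integral_diff[OF _ int, of "\<lambda>_. 1"] by simp
      finally show ?thesis using False E0 E1 by simp
    qed
  qed
qed

lemma pmf_bool_sum: "pmf (M :: bool pmf) True = 1 - pmf M False"
proof -
  have "(\<Sum>x\<in>UNIV. pmf M x) = 1" by (rule sum_pmf_eq_1) auto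
  then show ?thesis by (simp add: UNIV_bool)
qed

lemma integral_bool_pmf: "measure_pmf.expectation (M :: bool pmf) (f :: bool \<Rightarrow> real)
   = pmf M True * f True + pmf M False * f False"
  by (subst integral_measure_pmf[of UNIV]) (auto simp: UNIV_bool)

lemma integral_Pi_component:
  fixes f :: "'b \<Rightarrow> real"
  assumes "finite I" "n \<in> I"
  shows "(\<integral>F. f (F n) \<partial>Pi_pmf I d D) = measure_pmf.expectation (D n) f"
proof -
  have "(\<integral>F. f (F n) \<partial>Pi_pmf I d D) = measure_pmf.expectation (map_pmf (\<lambda>F. F n) (Pi_pmf I d D)) f"
    by simp
  also have "map_pmf (\<lambda>F. F n) (Pi_pmf I d D) = D n" by (subst Pi_pmf_component[OF assms(1)]) (simp add: assms(2))
  finally show ?thesis .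
qed

lemma int_bnd:
  fixes f :: "'a \<Rightarrow> real"
  assumes "\<And>z. \<bar>f z\<bar> \<le> B"
  shows "integrable (measure_pmf M) f"
  by (rule measure_pmf.integrable_const_bound[where B=B]) (use assms in auto)

lemma set_Pi_comp:
  assumes "finite I" "F \<in> set_pmf (Pi_pmf I d D)" "i \<in> I"
  shows "F i \<in> set_pmf (D i)"
  using assms set_Pi_pmf[OF assms(1), of d D] by (auto simp: PiE_dflt_def)

locale model =
  fixes q \<alpha> \<beta> :: real and L :: nat and a :: "nat \<Rightarrow> real" and x :: "nat \<Rightarrow> int"
  assumes q0: "0 < q" and q1: "q < 1" and L1: "1 \<le> L"
    and apos: "\<And>i. 1 \<le> i \<Longrightarrow> i \<le> L \<Longrightarrow> 0 < a i"
    and al0: "0 < \<alpha>" and be0: "0 < \<beta>"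
    and aal: "\<And>i. 1 \<le> i \<Longrightarrow> i \<le> L \<Longrightarrow> \<alpha> * a i < 1"
    and cfg: "config L x"
begin

definition "D i = geo_pmf q (a i * \<alpha>) (gap x i)"
definition "X F = (\<lambda>i. x i + int (F i))"
definition "gg i = nat (x (i - 1) - x i - 1)"
abbreviation "r \<equiv> rr a \<beta>"
definition "cc = 1 + \<alpha> / \<beta>"
definition "bet n F = pmf (Bj q a \<beta> (X F) n) False"
definition "fI I n = (\<integral>F. q ^ (F n) * bet n F \<partial>Pi_pmf I 0 D)"
definition "p n = pmf (Bj q a \<beta> x n) True"

lemma gap_int: "2 \<le> i \<Longrightarrow> i \<le> L \<Longrightarrow> x (i - 1) - x i - 1 = int (gg i)"
proof -
  assume i: "2 \<le> i" "i \<le> L"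
  have h: "\<forall>j. 1 \<le> j \<longrightarrow> j < L \<longrightarrow> x (Suc j) < x j" using cfg unfolding config_def by auto
  have "x (Suc (i - 1)) < x (i - 1)" using h[rule_format, of "i - 1"] i by simp
  then have "x i < x (i - 1)" using i by simp
  then show ?thesis using i by (simp add: gg_def)
qed

lemma gap_Some: "2 \<le> i \<Longrightarrow> gap x i = Some (gg i)"
  by (simp add: gap_def gg_def)

lemma gap_1: "gap x 1 = None"
  by (simp add: gap_def)

lemma qg_i: "1 \<le> i \<Longrightarrow> i \<le> L \<Longrightarrow> qg q (a i * \<alpha>)"
  using q0 q1 apos[of i] aal[of i] al0 by unfold_locales (auto simp: mult.commute)

lemma D_expect: "1 \<le> i \<Longrightarrow> i \<le> L \<Longrightarrow>
   measure_pmf.expectation (D i) (\<lambda>j. q ^ j) = 1 - a i * \<alpha> * (1 - qpow q (gap x i))"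
  unfolding D_def by (rule qg.geo_expect[OF qg_i])

lemma D_set: "2 \<le> i \<Longrightarrow> i \<le> L \<Longrightarrow> v \<in> set_pmf (D i) \<Longrightarrow> v \<le> gg i"
proof -
  assume i: "2 \<le> i" "i \<le> L" and v: "v \<in> set_pmf (D i)"
  have "v \<in> set_pmf (geo_pmf q (a i * \<alpha>) (Some (gg i)))" using v i gap_Some by (simp add: D_def)
  moreover have Q: "qg q (a i * \<alpha>)" using qg_i i by simp
  ultimately show "v \<le> gg i" using qg.geo_set[OF Q] by blast
qed

lemma r_bounds: "1 \<le> i \<Longrightarrow> i \<le> L \<Longrightarrow> 0 < r i \<and> r i < 1"
proof -
  assume i: "1 \<le> i" "i \<le> L"
  have p: "0 < a i * \<beta>" using apos[OF i] be0 by simp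
  then show ?thesis by (simp add: rr_def divide_less_eq)
qed

lemma key_r: "1 \<le> i \<Longrightarrow> i \<le> L \<Longrightarrow> (cc - 1) * r i = (1 - r i) * (a i * \<alpha>)"
proof -
  assume i: "1 \<le> i" "i \<le> L"
  have p: "0 < a i * \<beta>" using apos[OF i] be0 by simp
  then have "1 + a i * \<beta> \<noteq> 0" by linarith
  then show ?thesis using be0 by (simp add: rr_def cc_def field_simps)
qed

lemma qpow_bounds: "0 \<le> q ^ k \<and> q ^ k \<le> (1::real)"
  using q0 q1 by (simp add: power_le_one)

lemma bet_bounds: "0 \<le> bet n F \<and> bet n F \<le> 1"
  by (simp add: bet_def pmf_le_1)

lemma bet_1: "bet 1 F = 1 - r 1"
  using r_bounds[of 1] L1 by (simp add: bet_def)

lemma p_1: "p 1 = r 1"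
  using r_bounds[of 1] L1 by (simp add: p_def)

lemma pr_bounds:
  assumes "1 \<le> i" "i \<le> L"
  shows "0 \<le> (if b then r i else (1 - q ^ k) * r i) \<and> (if b then r i else (1 - q ^ k) * r i) \<le> 1"
proof -
  have "(1 - q ^ k) * r i \<le> 1 * 1"
    using r_bounds[OF assms] qpow_bounds[of k] by (intro mult_mono) auto
  then show ?thesis using r_bounds[OF assms] qpow_bounds[of k] by auto
qed

lemma Bj_Suc: "1 \<le> n \<Longrightarrow> Bj q a \<beta> y (Suc n) = bind_pmf (Bj q a \<beta> y n) (\<lambda>b. bernoulli_pmf
   (if b then r (Suc n) else (1 - q ^ nat (y n - y (Suc n) - 1)) * r (Suc n)))"
  by (simp)

lemma pmf_Bj_Suc:
  assumes n: "1 \<le> n" "Suc n \<le> L"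
  shows "pmf (Bj q a \<beta> y (Suc n)) False = (1 - r (Suc n)) + r (Suc n) * q ^ nat (y n - y (Suc n) - 1) * pmf (Bj q a \<beta> y n) False"
    and "pmf (Bj q a \<beta> y (Suc n)) True = r (Suc n) * (1 - q ^ nat (y n - y (Suc n) - 1) * pmf (Bj q a \<beta> y n) False)"
proof -
  define Q where "Q = q ^ nat (y n - y (Suc n) - 1)"
  define pr where "pr b = (if b then r (Suc n) else (1 - Q) * r (Suc n))" for b
  have prb: "0 \<le> pr b \<and> pr b \<le> 1" for b unfolding pr_def Q_def by (rule pr_bounds) (use n in auto)
  have B: "Bj q a \<beta> y (Suc n) = bind_pmf (Bj q a \<beta> y n) (\<lambda>b. bernoulli_pmf (pr b))"
    unfolding Bj_Suc[OF n(1)] pr_def Q_def ..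
  have "pmf (Bj q a \<beta> y (Suc n)) False = (\<integral>b. 1 - pr b \<partial>Bj q a \<beta> y n)"
    unfolding B pmf_bind using prb by (intro Bochner_Integration.integral_cong refl) auto
  also have "\<dots> = pmf (Bj q a \<beta> y n) True * (1 - pr True) + pmf (Bj q a \<beta> y n) False * (1 - pr False)"
    by (rule integral_bool_pmf)
  finally show "pmf (Bj q a \<beta> y (Suc n)) False = (1 - r (Suc n)) + r (Suc n) * Q * pmf (Bj q a \<beta> y n) False"
    unfolding pmf_bool_sum[of "Bj q a \<beta> y n"] pr_def by (simp add: algebra_simps)
  have "pmf (Bj q a \<beta> y (Suc n)) True = (\<integral>b. pr b \<partial>Bj q a \<beta> y n)"
    unfolding B pmf_bind using prb by (intro Bochner_Integration.integral_cong refl) auto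
  also have "\<dots> = pmf (Bj q a \<beta> y n) True * pr True + pmf (Bj q a \<beta> y n) False * pr False"
    by (rule integral_bool_pmf)
  finally show "pmf (Bj q a \<beta> y (Suc n)) True = r (Suc n) * (1 - Q * pmf (Bj q a \<beta> y n) False)"
    unfolding pmf_bool_sum[of "Bj q a \<beta> y n"] pr_def by (simp add: algebra_simps)
qed

lemma p_Suc:
  assumes n: "1 \<le> n" "Suc n \<le> L"
  shows "p (Suc n) = r (Suc n) * (1 - q ^ gg (Suc n) * (1 - p n))"
proof -
  have "nat (x n - x (Suc n) - 1) = gg (Suc n)" using gap_int[of "Suc n"] n by simp
  then show ?thesis unfolding p_def pmf_Bj_Suc(2)[OF n] pmf_bool_sum[of "Bj q a \<beta> x n"] by simp
qed

lemma bet_Suc: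
  assumes n: "1 \<le> n" "Suc n \<le> L" and F: "F (Suc n) \<le> gg (Suc n)"
  shows "q ^ F (Suc n) * bet (Suc n) F = (1 - r (Suc n)) * q ^ F (Suc n) + r (Suc n) * q ^ gg (Suc n) * (q ^ F n * bet n F)"
proof -
  have gi: "x n - x (Suc n) - 1 = int (gg (Suc n))" using gap_int[of "Suc n"] n by simp
  have "X F n - X F (Suc n) - 1 = int (gg (Suc n) + F n - F (Suc n))"
    using gi F by (simp add: X_def of_nat_diff)
  then have e: "nat (X F n - X F (Suc n) - 1) = gg (Suc n) + F n - F (Suc n)" by simp
  have pw: "q ^ F (Suc n) * q ^ (gg (Suc n) + F n - F (Suc n)) = q ^ gg (Suc n) * q ^ F n"
    using F by (simp add: power_add[symmetric])
  show ?thesis unfolding bet_def pmf_Bj_Suc(1)[OF n] e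
    using pw by (simp add: algebra_simps)
qed

lemma fI_1:
  assumes I: "finite I" "1 \<in> I"
  shows "fI I 1 = (1 - r 1) * (1 - a 1 * \<alpha>)"
proof -
  have "fI I 1 = (\<integral>F. (1 - r 1) * q ^ F 1 \<partial>Pi_pmf I 0 D)"
    unfolding fI_def bet_1 by (simp add: mult.commute)
  also have "\<dots> = (1 - r 1) * (\<integral>F. q ^ F 1 \<partial>Pi_pmf I 0 D)" by simp
  also have "(\<integral>F. q ^ F 1 \<partial>Pi_pmf I 0 D) = 1 - a 1 * \<alpha>"
    using integral_Pi_component[OF I, where f="\<lambda>v. q ^ v" and d=0 and D=D] D_expect[of 1] L1 by (simp add: gap_def qpow_def)
  finally show ?thesis .
qed

lemma fI_Suc:
  assumes I: "finite I" "{1..Suc n} \<subseteq> I" and n: "1 \<le> n" "Suc n \<le> L"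
  shows "fI I (Suc n) = (1 - r (Suc n)) * (1 - a (Suc n) * \<alpha> * (1 - q ^ gg (Suc n))) + r (Suc n) * q ^ gg (Suc n) * fI I n"
proof -
  have SI: "Suc n \<in> I" using I n by auto
  have "fI I (Suc n) = (\<integral>F. (1 - r (Suc n)) * q ^ F (Suc n) + r (Suc n) * q ^ gg (Suc n) * (q ^ F n * bet n F) \<partial>Pi_pmf I 0 D)"
    unfolding fI_def
  proof (rule integral_cong_AE)
    show "AE F in measure_pmf (Pi_pmf I 0 D). q ^ F (Suc n) * bet (Suc n) F = (1 - r (Suc n)) * q ^ F (Suc n) + r (Suc n) * q ^ gg (Suc n) * (q ^ F n * bet n F)"
    proof (rule AE_pmfI)
      fix F assume F: "F \<in> set_pmf (Pi_pmf I 0 D)"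
      have "F (Suc n) \<in> set_pmf (D (Suc n))" by (rule set_Pi_comp[OF I(1) F SI])
      then have "F (Suc n) \<le> gg (Suc n)" using D_set[of "Suc n"] n by auto
      then show "q ^ F (Suc n) * bet (Suc n) F = (1 - r (Suc n)) * q ^ F (Suc n) + r (Suc n) * q ^ gg (Suc n) * (q ^ F n * bet n F)"
        by (rule bet_Suc[OF n])
    qed
  qed auto
  also have "\<dots> = (1 - r (Suc n)) * (\<integral>F. q ^ F (Suc n) \<partial>Pi_pmf I 0 D) + r (Suc n) * q ^ gg (Suc n) * fI I n"
  proof -
    have i1: "integrable (Pi_pmf I 0 D) (\<lambda>F. (1 - r (Suc n)) * q ^ F (Suc n))"
      by (rule int_bnd[where B="\<bar>1 - r (Suc n)\<bar>"]) (use qpow_bounds in \<open>auto simp: abs_mult intro!: mult_left_le\<close>)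
    have i2: "integrable (Pi_pmf I 0 D) (\<lambda>F. r (Suc n) * q ^ gg (Suc n) * (q ^ F n * bet n F))"
    proof (rule int_bnd[where B="\<bar>r (Suc n) * q ^ gg (Suc n)\<bar>"])
      fix F
      have "\<bar>q ^ F n * bet n F\<bar> \<le> 1" using qpow_bounds[of "F n"] bet_bounds[of n F]
        by (auto simp: abs_mult intro: mult_le_one)
      then show "\<bar>r (Suc n) * q ^ gg (Suc n) * (q ^ F n * bet n F)\<bar> \<le> \<bar>r (Suc n) * q ^ gg (Suc n)\<bar>"
        by (simp add: abs_mult mult_left_le)
    qed
    show ?thesis unfolding fI_def using i1 i2 by (simp add: Bochner_Integration.integral_add)
  qed
  also have "(\<integral>F. q ^ F (Suc n) \<partial>Pi_pmf I 0 D) = 1 - a (Suc n) * \<alpha> * (1 - q ^ gg (Suc n))"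
    using integral_Pi_component[OF I(1) SI, where f="\<lambda>v. q ^ v" and d=0 and D=D] D_expect[of "Suc n"] n
    by (simp add: gap_Some qpow_def)
  finally show ?thesis .
qed

lemma invariant:
  assumes "1 \<le> n" "n \<le> L" "finite I" "{1..n} \<subseteq> I"
  shows "fI I n = 1 - cc * p n"
  using assms
proof (induction n rule: nat_induct_at_least)
  case base
  have "fI I 1 = (1 - r 1) * (1 - a 1 * \<alpha>)" by (rule fI_1) (use base in auto)
  also have "\<dots> = 1 - cc * p 1"
  proof -
    have "(1 - r 1) * (1 - a 1 * \<alpha>) - (1 - cc * r 1) = (cc - 1) * r 1 - (1 - r 1) * (a 1 * \<alpha>)"
      by (simp add: algebra_simps)
    then show ?thesis using key_r[of 1] L1 unfolding p_1 by simp
  qed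
  finally show ?case .
next
  case (Suc n)
  have "{1..Suc n} \<subseteq> I" using Suc by simp
  moreover have "{1..n} \<subseteq> {1..Suc n}" by auto
  ultimately have sub: "{1..n} \<subseteq> I" by blast
  have IH: "fI I n = 1 - cc * p n" using Suc sub by simp
  have "fI I (Suc n) = (1 - r (Suc n)) * (1 - a (Suc n) * \<alpha> * (1 - q ^ gg (Suc n))) + r (Suc n) * q ^ gg (Suc n) * fI I n"
    by (rule fI_Suc) (use Suc in auto)
  also have "\<dots> = 1 - cc * p (Suc n)"
  proof -
    define R where "R = r (Suc n)"
    define Q where "Q = q ^ gg (Suc n)"
    define A where "A = a (Suc n) * \<alpha>"
    have k: "(cc - 1) * R = (1 - R) * A" unfolding R_def A_def by (rule key_r) (use Suc in auto)
    have "(1 - R) * (1 - A * (1 - Q)) + R * Q * (1 - cc * p n) - (1 - cc * (R * (1 - Q * (1 - p n))))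
      = (1 - Q) * ((cc - 1) * R - (1 - R) * A)" by (simp add: algebra_simps)
    then have "(1 - R) * (1 - A * (1 - Q)) + R * Q * (1 - cc * p n) = 1 - cc * (R * (1 - Q * (1 - p n)))"
      using k by simp
    then show ?thesis unfolding IH p_Suc[OF Suc(1) Suc(3)] R_def Q_def A_def by (simp add: mult.assoc)
  qed
  finally show ?case .
qed

end

lemma expect_01:
  assumes h: "\<And>z. z \<in> set_pmf M \<Longrightarrow> 0 \<le> h z \<and> h z \<le> 1"
  shows "0 \<le> measure_pmf.expectation M h \<and> measure_pmf.expectation M h \<le> (1::real)"
proof -
  have int: "integrable M h"
    by (rule measure_pmf.integrable_const_bound[where B=1]) (use h in \<open>auto intro!: AE_pmfI\<close>)
  have E0: "0 \<le> measure_pmf.expectation M h"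
    by (rule integral_nonneg_AE) (use h in \<open>auto intro!: AE_pmfI\<close>)
  have "measure_pmf.expectation M h \<le> measure_pmf.expectation M (\<lambda>_. 1)"
    by (rule integral_mono_AE[OF int]) (use h in \<open>auto intro!: AE_pmfI\<close>)
  then show ?thesis using E0 by simp
qed

lemma bind_pair_pmf: "bind_pmf (pair_pmf A B) f = bind_pmf A (\<lambda>a. bind_pmf B (\<lambda>b. f (a, b)))"
  by (simp add: pair_pmf_def bind_assoc_pmf bind_return_pmf)

context model
begin

lemma geo_move_eq: "geo_move q L a \<alpha> x = map_pmf X (Pi_pmf {1..L} 0 D)"
  unfolding geo_move_def X_def D_def[abs_def] by simp

lemma bind_geo_comp:
  assumes m: "1 \<le> m" "m \<le> L"
  shows "bind_pmf (geo_move q L a \<alpha> x) (\<lambda>x'. \<Theta> (x' m)) = bind_pmf (D m) (\<lambda>v. \<Theta> (x m + int v))"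
proof -
  have "bind_pmf (geo_move q L a \<alpha> x) (\<lambda>x'. \<Theta> (x' m)) = bind_pmf (Pi_pmf {1..L} 0 D) (\<lambda>F. \<Theta> (x m + int (F m)))"
    unfolding geo_move_eq bind_map_pmf X_def ..
  also have "\<dots> = bind_pmf (map_pmf (\<lambda>F. F m) (Pi_pmf {1..L} 0 D)) (\<lambda>v. \<Theta> (x m + int v))"
    unfolding bind_map_pmf ..
  also have "map_pmf (\<lambda>F. F m) (Pi_pmf {1..L} 0 D) = D m"
    by (subst Pi_pmf_component) (use m in auto)
  finally show ?thesis .
qed

definition "Kv m v = (\<lambda>b. (x m + int v, x m + int v + (if b then 1 else 0)))"

lemma GB_1:
  "GB_pair q L a \<alpha> \<beta> x 1 = bind_pmf (D 1) (\<lambda>v. map_pmf (Kv 1 v) (bernoulli_pmf (r 1)))"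
proof -
  have "GB_pair q L a \<alpha> \<beta> x 1 = bind_pmf (geo_move q L a \<alpha> x) (\<lambda>x'. map_pmf (\<lambda>b. (x' 1, x' 1 + (if b then 1 else 0))) (bernoulli_pmf (r 1)))"
    unfolding GB_pair_def bern_move_def
  proof (rule bind_pmf_cong[OF refl])
    fix x' :: "nat \<Rightarrow> int"
    assume "x' \<in> set_pmf (geo_move q L a \<alpha> x)"
    have "map_pmf (\<lambda>y. (x' 1, y 1)) (bern_aux q a \<beta> x' L) = map_pmf (\<lambda>w. (x' 1, w)) (map_pmf (\<lambda>y. y 1) (bern_aux q a \<beta> x' L))"
      by (simp add: pmf.map_comp o_def)
    also have "\<dots> = map_pmf (\<lambda>w. (x' 1, w)) (map_pmf (\<lambda>b. x' 1 + (if b then 1 else 0)) (Bj q a \<beta> x' 1))"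
      using bern_marg[of 1 L q a \<beta> x'] L1 by simp
    finally show "map_pmf (\<lambda>y. (x' 1, y 1)) (bern_aux q a \<beta> x' L) = map_pmf (\<lambda>b. (x' 1, x' 1 + (if b then 1 else 0))) (bernoulli_pmf (r 1))"
      by (simp add: pmf.map_comp o_def)
  qed
  also have "\<dots> = bind_pmf (D 1) (\<lambda>v. map_pmf (Kv 1 v) (bernoulli_pmf (r 1)))"
    using bind_geo_comp[of 1 "\<lambda>w. map_pmf (\<lambda>b. (w, w + (if b then 1 else 0))) (bernoulli_pmf (r 1))"] L1
    by (simp add: Kv_def)
  finally show ?thesis .
qed

lemma dagger_1:
  "dagger_pair q L a \<alpha> \<beta> x 1 = bind_pmf (D 1) (\<lambda>v. map_pmf (Kv 1 v) (bernoulli_pmf (r 1)))"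
proof -
  have L0: "Lw q (- \<beta>) (a 1) (\<alpha> * a 1) None 0 1 = r 1"
    by (simp add: Lw_def qpow_def rr_def)
  have "dagger_pair q L a \<alpha> \<beta> x 1 = bind_pmf (bern_move q L a \<beta> x) (\<lambda>y. bind_pmf (geo_move q L a \<alpha> x) (\<lambda>x'.
      map_pmf (\<lambda>b. (x' 1, x' 1 + (if b then 1 else 0))) (bernoulli_pmf (r 1))))"
    unfolding dagger_pair_def bind_pair_pmf by (simp add: Lw_def qpow_def rr_def)
  also have "\<dots> = bind_pmf (geo_move q L a \<alpha> x) (\<lambda>x'.
      map_pmf (\<lambda>b. (x' 1, x' 1 + (if b then 1 else 0))) (bernoulli_pmf (r 1)))"
    by (rule bind_pmf_const)
  also have "\<dots> = bind_pmf (D 1) (\<lambda>v. map_pmf (Kv 1 v) (bernoulli_pmf (r 1)))"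
    using bind_geo_comp[of 1 "\<lambda>w. map_pmf (\<lambda>b. (w, w + (if b then 1 else 0))) (bernoulli_pmf (r 1))"] L1
    by (simp add: Kv_def)
  finally show ?thesis .
qed

end

context model
begin

definition "PG m v = (\<integral>F. (\<integral>b. (if b then r m else (1 - q ^ nat (X F (m - 1) - (x m + int v) - 1)) * r m)
     \<partial>Bj q a \<beta> (X F) (m - 1)) \<partial>Pi_pmf ({1..L} - {m}) 0 D)"

definition "PD m v = (\<integral>b. Lw q (- \<beta>) (a m) (\<alpha> * a m) (Some (nat (x (m - 1) - (x m + int v) - 1))) (if b then 1 else 0) 1
     \<partial>Bj q a \<beta> x (m - 1))"

lemma qpow_01: "0 \<le> qpow q i1 \<and> qpow q i1 \<le> 1"
  using qpow_bounds by (auto simp: qpow_def split: option.splits)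

lemma Lw_01:
  assumes i: "1 \<le> i" "i \<le> L"
  shows "0 \<le> Lw q (- \<beta>) (a i) (\<alpha> * a i) i1 (if b then 1 else 0) 1 \<and> Lw q (- \<beta>) (a i) (\<alpha> * a i) i1 (if b then 1 else 0) 1 \<le> 1"
proof -
  define g where "g = qpow q i1"
  have g: "0 \<le> g" "g \<le> 1" using qpow_01 unfolding g_def by auto
  have A: "0 < a i" using apos[OF i] .
  have B: "0 < a i * \<beta>" using A be0 by simp
  have C: "\<alpha> * a i < 1" using aal[OF i] .
  have h: "\<alpha> * a i * g \<le> \<alpha> * a i" using g A al0 by (intro mult_left_le) auto
  have C': "\<alpha> * a i * g \<le> 1" "0 \<le> \<alpha> * a i * g" using C h apply linarith
    using g A al0 by simp
  have D': "a i * \<beta> * (1 - g) \<le> a i * \<beta> * 1" "0 \<le> a i * \<beta> * (1 - g)"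
     apply (rule mult_left_mono) using g B by simp_all
  show ?thesis
  proof (cases b)
    case True
    have e: "Lw q (- \<beta>) (a i) (\<alpha> * a i) i1 (if b then 1 else 0) 1 = (\<alpha> * a i * g + a i * \<beta>) / (1 + a i * \<beta>)"
      using True by (simp add: Lw_def g_def)
    show ?thesis unfolding e using B C' by (simp add: divide_le_eq)
  next
    case False
    have e: "Lw q (- \<beta>) (a i) (\<alpha> * a i) i1 (if b then 1 else 0) 1 = (a i * \<beta> * (1 - g)) / (1 + a i * \<beta>)"
      using False by (simp add: Lw_def g_def)
    show ?thesis unfolding e using B D' by (simp add: divide_le_eq)
  qed
qed

lemma Lw_vals:
  assumes i: "1 \<le> i" "i \<le> L"
  shows "Lw q (- \<beta>) (a i) (\<alpha> * a i) (Some k) 0 1 = r i * (1 - q ^ k)"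
    and "Lw q (- \<beta>) (a i) (\<alpha> * a i) (Some k) 1 1 = a i * \<alpha> * q ^ k * (1 - r i) + r i"
proof -
  have B: "1 + a i * \<beta> \<noteq> 0" using apos[OF i] be0
    by (metis add_pos_pos less_numeral_extra(1) mult_pos_pos order_less_irrefl)
  show "Lw q (- \<beta>) (a i) (\<alpha> * a i) (Some k) 0 1 = r i * (1 - q ^ k)"
    using B by (simp add: Lw_def qpow_def rr_def field_simps)
  have e1: "1 - r i = 1 / (1 + a i * \<beta>)" using B by (simp add: rr_def field_simps)
  show "Lw q (- \<beta>) (a i) (\<alpha> * a i) (Some k) 1 1 = a i * \<alpha> * q ^ k * (1 - r i) + r i"
  proof -
    have L1: "Lw q (- \<beta>) (a i) (\<alpha> * a i) (Some k) 1 1 = (a i * \<alpha> * q ^ k + a i * \<beta>) / (1 + a i * \<beta>)"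
      by (simp add: Lw_def qpow_def mult_ac)
    have R1: "a i * \<alpha> * q ^ k * (1 / (1 + a i * \<beta>)) + r i = (a i * \<alpha> * q ^ k + a i * \<beta>) / (1 + a i * \<beta>)"
      by (simp add: rr_def add_divide_distrib)
    show ?thesis unfolding L1 e1 R1 ..
  qed
qed

end

context model
begin

lemma GB_m:
  assumes m: "2 \<le> m" "m \<le> L"
  shows "GB_pair q L a \<alpha> \<beta> x m = bind_pmf (D m) (\<lambda>v. map_pmf (Kv m v) (bernoulli_pmf (PG m v)))"
proof -
  define I where "I = {1..L} - {m}"
  define m' where "m' = m - 1"
  have mm: "m = Suc m'" "1 \<le> m'" using m by (auto simp: m'_def)
  have fI: "finite I" by (simp add: I_def)
  have mI: "m \<notin> I" by (simp add: I_def)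
  have ins: "insert m I = {1..L}" using m by (auto simp: I_def)
  define \<Phi> where "\<Phi> F = map_pmf (\<lambda>b. (X F m, X F m + (if b then 1 else 0))) (Bj q a \<beta> (X F) m)" for F
  define pr where "pr F v b = (if b then r m else (1 - q ^ nat (X F m' - (x m + int v) - 1)) * r m)" for F v b
  have S1: "GB_pair q L a \<alpha> \<beta> x m = bind_pmf (Pi_pmf {1..L} 0 D) \<Phi>"
    unfolding GB_pair_def bern_move_def geo_move_eq bind_map_pmf
  proof (rule bind_pmf_cong[OF refl])
    fix F assume "F \<in> set_pmf (Pi_pmf {1..L} 0 D)"
    have "map_pmf (\<lambda>y. (X F m, y m)) (bern_aux q a \<beta> (X F) L) = map_pmf (\<lambda>w. (X F m, w)) (map_pmf (\<lambda>y. y m) (bern_aux q a \<beta> (X F) L))"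
      by (simp add: pmf.map_comp o_def)
    also have "\<dots> = map_pmf (\<lambda>w. (X F m, w)) (map_pmf (\<lambda>b. X F m + (if b then 1 else 0)) (Bj q a \<beta> (X F) m))"
      using bern_marg[of m L q a \<beta> "X F"] m by simp
    finally show "map_pmf (\<lambda>y. (X F m, y m)) (bern_aux q a \<beta> (X F) L) = \<Phi> F"
      by (simp add: pmf.map_comp o_def \<Phi>_def)
  qed
  have S2: "Pi_pmf {1..L} 0 D = map_pmf (\<lambda>(v, F). F(m := v)) (pair_pmf (D m) (Pi_pmf I 0 D))"
    unfolding ins[symmetric] by (rule Pi_pmf_insert[OF fI mI])
  have S4: "\<Phi> (F(m := v)) = map_pmf (Kv m v) (bind_pmf (Bj q a \<beta> (X F) m') (\<lambda>b. bernoulli_pmf (pr F v b)))" for F v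
  proof -
    have XF: "X (F(m := v)) = (X F)(m := x m + int v)" by (auto simp: X_def fun_eq_iff)
    have loc: "Bj q a \<beta> (X (F(m := v))) m' = Bj q a \<beta> (X F) m'"
      unfolding XF by (rule Bj_local) (use mm in auto)
    have ne: "m' \<noteq> m" using mm(1) by simp
    have "Bj q a \<beta> (X (F(m := v))) m = bind_pmf (Bj q a \<beta> (X (F(m := v))) m') (\<lambda>b. bernoulli_pmf
       (if b then r m else (1 - q ^ nat (X (F(m := v)) m' - X (F(m := v)) m - 1)) * r m))"
      by (rule Bj_Suc[OF mm(2), of "X (F(m := v))", unfolded mm(1)[symmetric]])
    also have "\<dots> = bind_pmf (Bj q a \<beta> (X F) m') (\<lambda>b. bernoulli_pmf (pr F v b))"
    proof -
      have e1: "X (F(m := v)) m' = X F m'" using ne by (simp add: X_def)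
      have e2: "X (F(m := v)) m = x m + int v" by (simp add: X_def)
      show ?thesis unfolding loc pr_def e1 e2 ..
    qed
    finally have "Bj q a \<beta> (X (F(m := v))) m = bind_pmf (Bj q a \<beta> (X F) m') (\<lambda>b. bernoulli_pmf (pr F v b))" .
    moreover have "X (F(m := v)) m = x m + int v" by (simp add: XF)
    ultimately show ?thesis by (simp add: \<Phi>_def Kv_def)
  qed
  have prb: "0 \<le> pr F v b \<and> pr F v b \<le> 1" for F v b
    unfolding pr_def by (rule pr_bounds) (use m in auto)
  have S5: "\<Phi> (F(m := v)) = map_pmf (Kv m v) (bernoulli_pmf (\<integral>b. pr F v b \<partial>Bj q a \<beta> (X F) m'))" for F v
    unfolding S4 using prb by (subst bind_bernoulli) auto
  have hb: "0 \<le> (\<integral>b. pr F v b \<partial>Bj q a \<beta> (X F) m') \<and> (\<integral>b. pr F v b \<partial>Bj q a \<beta> (X F) m') \<le> 1" for F v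
    by (rule expect_01) (use prb in auto)
  have S6: "bind_pmf (Pi_pmf I 0 D) (\<lambda>F. \<Phi> (F(m := v))) = map_pmf (Kv m v) (bernoulli_pmf (PG m v))" for v
  proof -
    have "bind_pmf (Pi_pmf I 0 D) (\<lambda>F. \<Phi> (F(m := v))) =
       map_pmf (Kv m v) (bind_pmf (Pi_pmf I 0 D) (\<lambda>F. bernoulli_pmf (\<integral>b. pr F v b \<partial>Bj q a \<beta> (X F) m')))"
      unfolding S5 map_bind_pmf ..
    also have "bind_pmf (Pi_pmf I 0 D) (\<lambda>F. bernoulli_pmf (\<integral>b. pr F v b \<partial>Bj q a \<beta> (X F) m')) = bernoulli_pmf (PG m v)"
      unfolding PG_def pr_def[abs_def] I_def[symmetric] m'_def[symmetric] using hb[unfolded pr_def]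
      by (subst bind_bernoulli) auto
    finally show ?thesis .
  qed
  have "GB_pair q L a \<alpha> \<beta> x m = bind_pmf (D m) (\<lambda>v. bind_pmf (Pi_pmf I 0 D) (\<lambda>F. \<Phi> (F(m := v))))"
    unfolding S1 S2 bind_map_pmf bind_pair_pmf by simp
  then show ?thesis unfolding S6 .
qed

end

context model
begin

lemma dagger_m:
  assumes m: "2 \<le> m" "m \<le> L"
  shows "dagger_pair q L a \<alpha> \<beta> x m = bind_pmf (D m) (\<lambda>v. map_pmf (Kv m v) (bernoulli_pmf (PD m v)))"
proof -
  define LL where "LL w j1 = Lw q (- \<beta>) (a m) (\<alpha> * a m) (Some (nat (x (m - 1) - w - 1))) j1 1" for w j1
  define PDw where "PDw w = (\<integral>b. LL w (if b then 1 else 0) \<partial>Bj q a \<beta> x (m - 1))" for w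
  let ?A = "bern_move q L a \<beta> x" and ?B = "geo_move q L a \<alpha> x"
  have S1: "dagger_pair q L a \<alpha> \<beta> x m = bind_pmf ?A (\<lambda>y. bind_pmf ?B (\<lambda>x'.
      map_pmf (\<lambda>b. (x' m, x' m + (if b then 1 else 0))) (bernoulli_pmf (LL (x' m) (nat (y (m - 1) - x (m - 1)))))))"
    unfolding dagger_pair_def bind_pair_pmf Let_def using m by (simp add: LL_def)
  also have "\<dots> = bind_pmf ?B (\<lambda>x'. bind_pmf ?A (\<lambda>y.
      map_pmf (\<lambda>b. (x' m, x' m + (if b then 1 else 0))) (bernoulli_pmf (LL (x' m) (nat (y (m - 1) - x (m - 1)))))))"
    by (rule bind_commute_pmf)
  also have "\<dots> = bind_pmf ?B (\<lambda>x'. map_pmf (\<lambda>b. (x' m, x' m + (if b then 1 else 0))) (bernoulli_pmf (PDw (x' m))))"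
  proof (rule bind_pmf_cong[OF refl])
    fix x' assume "x' \<in> set_pmf ?B"
    define w where "w = x' m"
    have marg: "map_pmf (\<lambda>y. y (m - 1)) ?A = map_pmf (\<lambda>b. x (m - 1) + (if b then 1 else 0)) (Bj q a \<beta> x (m - 1))"
      unfolding bern_move_def by (rule bern_marg) (use m in auto)
    have "bind_pmf ?A (\<lambda>y. bernoulli_pmf (LL w (nat (y (m - 1) - x (m - 1)))))
        = bind_pmf (map_pmf (\<lambda>y. y (m - 1)) ?A) (\<lambda>y'. bernoulli_pmf (LL w (nat (y' - x (m - 1)))))"
      by (simp add: bind_map_pmf)
    also have "\<dots> = bind_pmf (Bj q a \<beta> x (m - 1)) (\<lambda>b. bernoulli_pmf (LL w (if b then 1 else 0)))"
      unfolding marg bind_map_pmf by (intro bind_pmf_cong refl) auto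
    also have "\<dots> = bernoulli_pmf (PDw w)"
      unfolding PDw_def LL_def by (rule bind_bernoulli) (use Lw_01 m in auto)
    finally have e: "bind_pmf ?A (\<lambda>y. bernoulli_pmf (LL w (nat (y (m - 1) - x (m - 1))))) = bernoulli_pmf (PDw w)" .
    show "bind_pmf ?A (\<lambda>y. map_pmf (\<lambda>b. (x' m, x' m + (if b then 1 else 0))) (bernoulli_pmf (LL (x' m) (nat (y (m - 1) - x (m - 1))))))
        = map_pmf (\<lambda>b. (x' m, x' m + (if b then 1 else 0))) (bernoulli_pmf (PDw (x' m)))"
      using e unfolding w_def by (simp add: map_bind_pmf[symmetric])
  qed
  also have "\<dots> = bind_pmf (D m) (\<lambda>v. map_pmf (\<lambda>b. (x m + int v, x m + int v + (if b then 1 else 0))) (bernoulli_pmf (PDw (x m + int v))))"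
    by (rule bind_geo_comp[where \<Theta>="\<lambda>w. map_pmf (\<lambda>b. (w, w + (if b then 1 else 0))) (bernoulli_pmf (PDw w))"]) (use m in auto)
  also have "\<dots> = bind_pmf (D m) (\<lambda>v. map_pmf (Kv m v) (bernoulli_pmf (PD m v)))"
    by (simp add: Kv_def PD_def PDw_def LL_def)
  finally show ?thesis .
qed

lemma PD_PG:
  assumes m: "2 \<le> m" "m \<le> L" and v: "v \<in> set_pmf (D m)"
  shows "PD m v = PG m v"
proof -
  define m' where "m' = m - 1"
  have mm: "m = Suc m'" "1 \<le> m'" using m by (auto simp: m'_def)
  define I where "I = {1..L} - {m}"
  have vg: "v \<le> gg m" by (rule D_set[OF m v])
  have gi: "x m' - x m - 1 = int (gg m)" using gap_int[OF m] by (simp add: m'_def)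
  define Q where "Q = q ^ (gg m - v)"
  define pp where "pp = p m'"
  have k: "nat (x m' - (x m + int v) - 1) = gg m - v" using gi vg by simp
  have PDv: "PD m v = pp * (a m * \<alpha> * Q * (1 - r m) + r m) + (1 - pp) * (r m * (1 - Q))"
  proof -
    have "PD m v = pmf (Bj q a \<beta> x m') True * Lw q (- \<beta>) (a m) (\<alpha> * a m) (Some (gg m - v)) 1 1
       + pmf (Bj q a \<beta> x m') False * Lw q (- \<beta>) (a m) (\<alpha> * a m) (Some (gg m - v)) 0 1"
      unfolding PD_def m'_def[symmetric] k integral_bool_pmf by simp
    then show ?thesis using Lw_vals[of m "gg m - v"] m
      by (simp add: pp_def p_def Q_def pmf_bool_sum)
  qed
  have inner: "(\<integral>b. (if b then r m else (1 - q ^ nat (X F m' - (x m + int v) - 1)) * r m) \<partial>Bj q a \<beta> (X F) m')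
      = r m - r m * Q * (q ^ F m' * bet m' F)" for F
  proof -
    have "X F m' - (x m + int v) - 1 = int (gg m - v + F m')" using gi vg by (simp add: X_def of_nat_diff)
    then have e: "nat (X F m' - (x m + int v) - 1) = gg m - v + F m'" by simp
    show ?thesis unfolding integral_bool_pmf e pmf_bool_sum[of "Bj q a \<beta> (X F) m'"]
      by (simp add: bet_def Q_def power_add algebra_simps)
  qed
  have PGv: "PG m v = r m - r m * Q * fI I m'"
  proof -
    have "PG m v = (\<integral>F. r m - r m * Q * (q ^ F m' * bet m' F) \<partial>Pi_pmf I 0 D)"
      unfolding PG_def m'_def[symmetric] I_def[symmetric] inner ..
    also have "\<dots> = r m - r m * Q * fI I m'"
    proof -
      have i2: "integrable (Pi_pmf I 0 D) (\<lambda>F. r m * Q * (q ^ F m' * bet m' F))"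
      proof (rule int_bnd[where B="\<bar>r m * Q\<bar>"])
        fix F
        have "\<bar>q ^ F m' * bet m' F\<bar> \<le> 1" using qpow_bounds[of "F m'"] bet_bounds[of m' F]
          by (auto simp: abs_mult intro: mult_le_one)
        then show "\<bar>r m * Q * (q ^ F m' * bet m' F)\<bar> \<le> \<bar>r m * Q\<bar>"
          by (simp add: abs_mult mult_left_le)
      qed
      show ?thesis unfolding fI_def using i2 by (simp add: Bochner_Integration.integral_diff)
    qed
    finally show ?thesis .
  qed
  have inv: "fI I m' = 1 - cc * pp"
    unfolding pp_def by (rule invariant) (use mm m in \<open>auto simp: I_def\<close>)
  have kr: "(cc - 1) * r m = (1 - r m) * (a m * \<alpha>)" by (rule key_r) (use m in auto)
  have "PG m v - PD m v = pp * Q * ((cc - 1) * r m - (1 - r m) * (a m * \<alpha>))"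
    unfolding PGv PDv inv by (simp add: algebra_simps)
  then show ?thesis using kr by simp
qed

end

theorem proposition5p11:
  fixes q \<alpha> \<beta> :: real and L m :: nat and a :: "nat \<Rightarrow> real" and x :: "nat \<Rightarrow> int"
  assumes "0 < q" "q < 1"
    and "1 \<le> L"
    and "\<And>i. 1 \<le> i \<Longrightarrow> i \<le> L \<Longrightarrow> 0 < a i"
    and "0 < \<alpha>" "0 < \<beta>"
    and "\<And>i. 1 \<le> i \<Longrightarrow> i \<le> L \<Longrightarrow> \<alpha> * a i < 1"
    and "config L x"
    and "1 \<le> m" "m \<le> L"
  shows "dagger_pair q L a \<alpha> \<beta> x m = GB_pair q L a \<alpha> \<beta> x m"
proof -
  interpret model q \<alpha> \<beta> L a x
    by unfold_locales (use assms in auto)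
  show ?thesis
  proof (cases "m = 1")
    case True
    then show ?thesis using dagger_1 GB_1 by simp
  next
    case False
    then have m: "2 \<le> m" "m \<le> L" using assms by auto
    show ?thesis unfolding dagger_m[OF m] GB_m[OF m]
      by (intro bind_pmf_cong refl) (simp add: PD_PG[OF m])
  qed
qed

end
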